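(* Let $\alpha:R\to R'$ be a Jordan homomorphism and let $R''$ be the subring of $R'$ generated by $R^\alpha$. Let $H$ and $H''$ be the centres of $E_2(R)$ and $E_2(R'')$, respectively. Then: (a) for every finite sequence $T$ in $R$, $E(T)\in H$ implies $E(T^\alpha)\in H''$; (b) the set $N_\alpha:=\{E(T^\alpha)\mid T \text{ a finite sequence in } R \text{ with } E(T)=I\}$ is contained in $H''$; (c) $N_\alpha$ is a normal subgroup of $E_2(R'')$, and the mapping $\alpha_E:E_2(R)\to E_2(R'')/N_\alpha$, $E(T)\mapsto N_\alpha\cdot E(T^\alpha)$ (for finite sequences $T$ in $R$) is a well defined homomorphism of groups.
   Context: Rings are associative with $1$, preserved by homomorphisms and inherited by subrings. A Jordan homomorphism $\alpha:R\to R'$ is a map with $(a+b)^\alpha=a^\alpha+b^\alpha$, $1^\alpha=1'$, $(aba)^\alpha=a^\alpha b^\alpha a^\alpha$ for all $a,b\in R$. For $t$ in a ring let $E(t):=\begin{pmatrix} t&1\\-1&0\end{pmatrix}$; for a finite sequence $T=(t_1,\ldots,t_n)$ ($n\geq 0$) let $E(T):=E(t_1)E(t_2)\cdots E(t_n)$ (the identity $I$ if $n=0$), and $T^\alpha:=(t_1^\alpha,\ldots,t_n^\alpha)$. $E_2(R)$ is the subgroup of $GL_2(R)$ generated by all $E(t)$, $t\in R$; every element of $E_2(R)$ has the form $E(T)$. Its centre is $E_2(R)\cap\{\mathrm{diag}(a,a)\mid a \text{ a central unit of } R\}$. *)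

theory Defs
  imports "HOL-Analysis.Analysis" "HOL-Algebra.Algebra"
begin

definition jordan_hom :: "('a::ring_1 \<Rightarrow> 'b::ring_1) \<Rightarrow> bool" where
  "jordan_hom \<alpha> \<longleftrightarrow>
     (\<forall>a b. \<alpha> (a + b) = \<alpha> a + \<alpha> b) \<and> \<alpha> 1 = 1 \<and>
     (\<forall>a b. \<alpha> (a * b * a) = \<alpha> a * \<alpha> b * \<alpha> a)"

definition subring_gen :: "'b::ring_1 set \<Rightarrow> 'b set" where
  "subring_gen S = \<Inter>{A. S \<subseteq> A \<and> 1 \<in> A \<and> 0 \<in> A \<and>
      (\<forall>x\<in>A. \<forall>y\<in>A. x + y \<in> A \<and> x - y \<in> A \<and> x * y \<in> A)}"

definition Emat1 :: "'a::ring_1 \<Rightarrow> 'a^2^2" where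
  "Emat1 t = (\<chi> i j. if i = 1 then (if j = 1 then t else 1)
                     else (if j = 1 then -1 else 0))"

definition Emat :: "'a::ring_1 list \<Rightarrow> 'a^2^2" where
  "Emat T = foldr (\<lambda>t M. Emat1 t ** M) T (mat 1)"

definition M2 :: "'a::ring_1 itself \<Rightarrow> ('a^2^2) monoid" where
  "M2 _ = \<lparr>carrier = UNIV, mult = (**), one = mat 1\<rparr>"

definition GL2 :: "'a::ring_1 itself \<Rightarrow> ('a^2^2) monoid" where
  "GL2 x = units_of (M2 x)"

definition E2 :: "'a::ring_1 set \<Rightarrow> ('a^2^2) set" where
  "E2 S = generate (GL2 TYPE('a)) (Emat1 ` S)"

definition E2grp :: "'a::ring_1 set \<Rightarrow> ('a^2^2) monoid" where
  "E2grp S = (GL2 TYPE('a))\<lparr>carrier := E2 S\<rparr>"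

definition centre :: "('g, 'c) monoid_scheme \<Rightarrow> 'g set" where
  "centre G = {z \<in> carrier G. \<forall>g\<in>carrier G. z \<otimes>\<^bsub>G\<^esub> g = g \<otimes>\<^bsub>G\<^esub> z}"

end

theory Submission
  imports Defs
begin

definition M2mk :: "'a::ring_1 \<Rightarrow> 'a \<Rightarrow> 'a \<Rightarrow> 'a \<Rightarrow> 'a^2^2" where
  "M2mk a b c d = (\<chi> i j. if i = 1 then (if j = 1 then a else b) else (if j = 1 then c else d))"

lemma M2mk_nth [simp]:
  "M2mk a b c d $ 1 $ 1 = a" "M2mk a b c d $ 1 $ 2 = b"
  "M2mk a b c d $ 2 $ 1 = c" "M2mk a b c d $ 2 $ 2 = d"
  by (simp_all add: M2mk_def)

lemma M2_eta: "(M :: 'a::ring_1^2^2) = M2mk (M$1$1) (M$1$2) (M$2$1) (M$2$2)"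
  unfolding M2mk_def
  by (auto simp: vec_eq_iff forall_2)

lemma M2mk_eq_iff [simp]:
  "M2mk a b c d = M2mk a2 b2 c2 d2 \<longleftrightarrow> a = a2 \<and> b = b2 \<and> c = c2 \<and> d = d2"
  by (auto simp: vec_eq_iff forall_2 M2mk_def)

lemma M2mk_mult [simp]:
  "M2mk a b c d ** M2mk a2 b2 c2 d2 =
     M2mk (a * a2 + b * c2) (a * b2 + b * d2) (c * a2 + d * c2) (c * b2 + d * d2)"
  by (simp add: vec_eq_iff forall_2 matrix_matrix_mult_def sum_2 M2mk_def)

lemma mat1_M2: "(mat 1 :: 'a::ring_1^2^2) = M2mk 1 0 0 1"
  by (simp add: vec_eq_iff forall_2 mat_def M2mk_def)

lemma Emat1_M2: "Emat1 t = M2mk t 1 (-1) 0"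
  by (simp add: vec_eq_iff forall_2 Emat1_def M2mk_def)

lemma Emat_Nil [simp]: "Emat [] = mat 1" by (simp add: Emat_def)
lemma Emat_Cons [simp]: "Emat (t # T) = Emat1 t ** Emat T" by (simp add: Emat_def)
lemma Emat_append: "Emat (T @ S) = Emat T ** Emat S"
  by (induction T) (simp_all add: matrix_mul_assoc)
lemma Emat_snoc: "Emat (T @ [t]) = Emat T ** Emat1 t"
  by (simp add: Emat_append)


section \<open>Jordan homomorphism basics\<close>

lemma jh_add: "jordan_hom f \<Longrightarrow> f (a + b) = f a + f b" by (simp add: jordan_hom_def)
lemma jh_one: "jordan_hom f \<Longrightarrow> f 1 = 1" by (simp add: jordan_hom_def)
lemma jh_U: "jordan_hom f \<Longrightarrow> f (a * b * a) = f a * f b * f a" by (simp add: jordan_hom_def)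
lemma jh_zero: "jordan_hom f \<Longrightarrow> f 0 = 0"
  using jh_add[of f 0 0] by simp
lemma jh_uminus: "jordan_hom f \<Longrightarrow> f (- a) = - f a"
  using jh_add[of f a "- a"] jh_zero[of f] by (metis minus_unique add.right_inverse)
lemma jh_diff: "jordan_hom f \<Longrightarrow> f (a - b) = f a - f b"
  using jh_add[of f a "- b"] jh_uminus[of f b] by simp
lemma jh_triple: assumes "jordan_hom f"
  shows "f (a * b * c + c * b * a) = f a * f b * f c + f c * f b * f a"
proof -
  have e: "(a + c) * b * (a + c) = a * b * a + (a * b * c + c * b * a) + c * b * c"
    by (simp add: algebra_simps)
  have "f ((a + c) * b * (a + c)) = (f a + f c) * f b * (f a + f c)"
    using jh_U[OF assms] jh_add[OF assms] by simp
  also have "\<dots> = f a * f b * f a + (f a * f b * f c + f c * f b * f a) + f c * f b * f c"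
    by (simp add: algebra_simps)
  finally show ?thesis unfolding e jh_add[OF assms] jh_U[OF assms] by simp
qed

section \<open>Continuant data\<close>

definition EA :: "'a::ring_1 list \<Rightarrow> 'a" where "EA T = Emat T $ 1 $ 1"
definition EB :: "'a::ring_1 list \<Rightarrow> 'a" where "EB T = Emat T $ 1 $ 2"
definition ET :: "'a::ring_1 list \<Rightarrow> 'a" where "ET T = Emat (rev T) $ 1 $ 1"
definition EBt :: "'a::ring_1 list \<Rightarrow> 'a" where "EBt T = - (Emat (rev T) $ 2 $ 1)"

lemma EA_Nil [simp]: "EA [] = 1" and EB_Nil [simp]: "EB [] = 0"
  and ET_Nil [simp]: "ET [] = 1" and EBt_Nil [simp]: "EBt [] = 0"
  by (simp_all add: EA_def EB_def ET_def EBt_def mat1_M2)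

lemma E_snoc:
  "EA (T @ [t]) = EA T * t - EB T" "EB (T @ [t]) = EA T"
  "ET (T @ [t]) = t * ET T - EBt T" "EBt (T @ [t]) = ET T"
proof -
  have 1: "Emat (T @ [t]) = M2mk (Emat T $1$1) (Emat T $1$2) (Emat T $2$1) (Emat T $2$2) ** M2mk t 1 (-1) 0"
    by (simp only: Emat_snoc Emat1_M2, subst M2_eta[of "Emat T"], rule refl)
  have 2: "Emat (rev (T @ [t])) = M2mk t 1 (-1) 0 ** M2mk (Emat (rev T) $1$1) (Emat (rev T) $1$2) (Emat (rev T) $2$1) (Emat (rev T) $2$2)"
    by (simp only: rev_append rev.simps append.simps Emat_Cons Emat1_M2, subst M2_eta[of "Emat (rev T)"], rule refl)
  show "EA (T @ [t]) = EA T * t - EB T" "EB (T @ [t]) = EA T"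
    "ET (T @ [t]) = t * ET T - EBt T" "EBt (T @ [t]) = ET T"
    unfolding EA_def EB_def ET_def EBt_def 1 2 by simp_all
qed

definition Fcal :: "'a::ring_1 list \<Rightarrow> 'a \<Rightarrow> 'a \<Rightarrow> 'a \<Rightarrow> 'a \<Rightarrow> 'a" where
  "Fcal T x y y2 z = EA T * x * ET T + EA T * y * EBt T + EB T * y2 * ET T + EB T * z * EBt T"

lemma Fcal_Nil: "Fcal [] x y y2 z = x" by (simp add: Fcal_def)

lemma Fcal_snoc:
  "Fcal (T @ [t]) x y y2 z = Fcal T (t * x * t + t * y + y2 * t + z) (- (t * x + y2)) (- (x * t + y)) x"
  by (simp add: Fcal_def E_snoc algebra_simps)

lemma transport:
  assumes jh: "jordan_hom f"
  shows "\<forall>x y y2 z xa ya yb za. f x = xa \<longrightarrow> f z = za \<longrightarrow>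
     (\<forall>s. f (s * y + y2 * s) = f s * ya + yb * f s) \<longrightarrow>
     (\<forall>s. f (y * s + s * y2) = ya * f s + f s * yb) \<longrightarrow>
     f (Fcal T x y y2 z) = Fcal (map f T) xa ya yb za"
proof (induction T rule: rev_induct)
  case Nil
  then show ?case by (simp add: Fcal_Nil)
next
  case (snoc t T)
  show ?case
  proof (intro allI impI)
    fix x y y2 z xa ya yb za
    assume hX: "f x = xa" and hZ: "f z = za"
      and hY: "\<forall>s. f (s * y + y2 * s) = f s * ya + yb * f s"
      and hy2: "\<forall>s. f (y * s + s * y2) = ya * f s + f s * yb"
    let ?x = "t * x * t + t * y + y2 * t + z" and ?y = "- (t * x + y2)" and ?y2 = "- (x * t + y)"
    let ?xa = "f t * xa * f t + f t * ya + yb * f t + za" and ?ya = "- (f t * xa + yb)"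
      and ?yb = "- (xa * f t + ya)"
    have a: "f ?x = ?xa"
      using hX hZ hY[rule_format, of t] by (simp add: jh_add[OF jh] jh_U[OF jh] add.assoc)
    have b: "\<forall>s. f (s * ?y + ?y2 * s) = f s * ?ya + ?yb * f s"
    proof
      fix s
      have "s * ?y + ?y2 * s = - ((s * t * x + x * t * s) + (y * s + s * y2))"
        by (simp add: algebra_simps)
      hence "f (s * ?y + ?y2 * s) = - (f (s * t * x + x * t * s) + f (y * s + s * y2))"
        by (simp only: jh_uminus[OF jh] jh_add[OF jh])
      hence "f (s * ?y + ?y2 * s) = - ((f s * f t * xa + xa * f t * f s) + (ya * f s + f s * yb))"
        using hX hy2 by (simp only: jh_triple[OF jh])
      thus "f (s * ?y + ?y2 * s) = f s * ?ya + ?yb * f s" by (simp add: algebra_simps)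
    qed
    have c: "\<forall>s. f (?y * s + s * ?y2) = ?ya * f s + f s * ?yb"
    proof
      fix s
      have "?y * s + s * ?y2 = - ((t * x * s + s * x * t) + (s * y + y2 * s))"
        by (simp add: algebra_simps)
      hence "f (?y * s + s * ?y2) = - (f (t * x * s + s * x * t) + f (s * y + y2 * s))"
        by (simp only: jh_uminus[OF jh] jh_add[OF jh])
      hence "f (?y * s + s * ?y2) = - ((f t * xa * f s + f s * xa * f t) + (f s * ya + yb * f s))"
        using hX hY by (simp only: jh_triple[OF jh])
      thus "f (?y * s + s * ?y2) = ?ya * f s + f s * ?yb" by (simp add: algebra_simps)
    qed
    have "f (Fcal T ?x ?y ?y2 x) = Fcal (map f T) ?xa ?ya ?yb xa"
      using snoc.IH a b c hX by blast
    thus "f (Fcal (T @ [t]) x y y2 z) = Fcal (map f (T @ [t])) xa ya yb za"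
      by (simp add: Fcal_snoc)
  qed
qed


definition Jm :: "'a::ring_1^2^2" where "Jm = M2mk 0 1 1 0"

lemma Jm_Jm: "(Jm :: 'a::ring_1^2^2) ** Jm = mat 1"
  by (simp add: Jm_def mat1_M2)

lemma E1_J: "Emat1 t ** Jm ** Emat1 t ** Jm = mat 1"
  by (simp add: Jm_def mat1_M2 Emat1_M2)

lemma Emat_J_inv: "Emat T ** Jm ** Emat (rev T) ** Jm = mat 1"
proof (induction T)
  case Nil
  then show ?case by (simp add: Jm_Jm)
next
  case (Cons t T)
  have k: "Emat T ** Jm ** Emat (rev T) = Jm"
  proof -
    have "Emat T ** Jm ** Emat (rev T) = Emat T ** Jm ** Emat (rev T) ** (Jm ** Jm)"
      by (simp add: Jm_Jm)
    also have "\<dots> = (Emat T ** Jm ** Emat (rev T) ** Jm) ** Jm"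
      by (simp add: matrix_mul_assoc)
    also have "\<dots> = Jm" using Cons.IH by simp
    finally show ?thesis .
  qed
  have "Emat (t # T) ** Jm ** Emat (rev (t # T)) ** Jm
      = Emat1 t ** (Emat T ** Jm ** Emat (rev T)) ** Emat1 t ** Jm"
    by (simp add: Emat_snoc matrix_mul_assoc)
  also have "\<dots> = mat 1" using k E1_J[of t] by simp
  finally show ?case .
qed

lemma transport':
  assumes "jordan_hom f" "f x = xa" "f z = za"
    "\<forall>s. f (s * y + w * s) = f s * ya + yb * f s"
    "\<forall>s. f (y * s + s * w) = ya * f s + f s * yb"
  shows "f (Fcal T x y w z) = Fcal (map f T) xa ya yb za"
  using transport[OF assms(1), of T] assms(2-5) by blast

lemma core:
  fixes f :: "'a::ring_1 \<Rightarrow> 'b::ring_1"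
  assumes jh: "jordan_hom f" and ES: "Emat S = M2mk p 0 0 p"
  shows "EB (map f S) = 0 \<and> EA (map f S) * ET (map f S) = 1 \<and> ET (map f S) * EA (map f S) = 1"
proof -
  have r1: "p * ET S = 1"
  proof -
    have "M2mk p 0 0 p ** Jm ** Emat (rev S) ** Jm = mat 1"
      using Emat_J_inv[of S] ES by simp
    hence "M2mk p 0 0 p ** Jm ** M2mk (Emat (rev S) $1$1) (Emat (rev S) $1$2) (Emat (rev S) $2$1) (Emat (rev S) $2$2) ** Jm = M2mk 1 0 0 1"
      by (subst (asm) M2_eta[of "Emat (rev S)"]) (simp add: mat1_M2)
    thus ?thesis by (simp add: Jm_def ET_def)
  qed
  have r2: "ET S * p = 1"
  proof -
    have "Emat (rev S) ** Jm ** M2mk p 0 0 p ** Jm = mat 1"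
      using Emat_J_inv[of "rev S"] ES by simp
    hence "M2mk (Emat (rev S) $1$1) (Emat (rev S) $1$2) (Emat (rev S) $2$1) (Emat (rev S) $2$2) ** Jm ** M2mk p 0 0 p ** Jm = M2mk 1 0 0 1"
      by (subst (asm) M2_eta[of "Emat (rev S)"]) (simp add: mat1_M2)
    thus ?thesis by (simp add: Jm_def ET_def)
  qed
  have EAS: "EA S = p" and EBS: "EB S = 0" using ES by (simp_all add: EA_def EB_def)
  have z0: "\<forall>s. f (s * 0 + 0 * s) = f s * 0 + 0 * f s" "\<forall>s. f (0 * s + s * 0) = 0 * f s + f s * 0"
    using jh_zero[OF jh] by simp_all
  have z1: "\<forall>s. f (s * 0 + 1 * s) = f s * 0 + 1 * f s" "\<forall>s. f (0 * s + s * 1) = 0 * f s + f s * 1"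
    by simp_all
  have f0: "f 0 = 0" using jh_zero[OF jh] .
  have f1: "f 1 = 1" using jh_one[OF jh] .
  have a1: "f (Fcal S 1 0 0 0) = Fcal (map f S) 1 0 0 0"
    using transport'[OF jh, where T=S and x=1 and y=0 and w=0 and z=0 and xa=1 and ya=0 and yb=0 and za=0] z0 f0 f1 by simp
  hence A1: "EA (map f S) * ET (map f S) = 1"
    by (simp add: Fcal_def EAS r1 f1)
  have a2: "f (Fcal (rev S) 1 0 0 0) = Fcal (map f (rev S)) 1 0 0 0"
    using transport'[OF jh, where T="rev S" and x=1 and y=0 and w=0 and z=0 and xa=1 and ya=0 and yb=0 and za=0] z0 f0 f1 by simp
  have "EA (rev S) = ET S" "ET (rev S) = EA S" by (simp_all add: EA_def ET_def)
  moreover have "EA (map f (rev S)) = ET (map f S)" "ET (map f (rev S)) = EA (map f S)"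
    by (simp_all add: EA_def ET_def rev_map)
  ultimately have A2: "ET (map f S) * EA (map f S) = 1"
    using a2 by (simp add: Fcal_def EAS r2 f1)
  have a3: "f (Fcal S 0 0 1 0) = Fcal (map f S) 0 0 1 0"
    using transport'[OF jh, where T=S and x=0 and y=0 and w=1 and z=0 and xa=0 and ya=0 and yb=1 and za=0] z1 f0 by simp
  hence B0: "EB (map f S) * ET (map f S) = 0"
    by (simp add: Fcal_def EBS f0)
  have "EB (map f S) = EB (map f S) * (ET (map f S) * EA (map f S))" using A2 by simp
  also have "\<dots> = 0" using B0 by (simp add: mult.assoc[symmetric])
  finally show ?thesis using A1 A2 by simp
qed


lemma monoid_M2: "monoid (M2 x)"
  by (unfold_locales) (simp_all add: M2_def matrix_mul_assoc)

lemma group_GL2: "group (GL2 x)"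
  unfolding GL2_def using monoid.units_group[OF monoid_M2] .

lemma GL2_mult [simp]: "a \<otimes>\<^bsub>GL2 x\<^esub> b = a ** b"
  by (simp add: GL2_def units_of_def M2_def)
lemma GL2_one [simp]: "\<one>\<^bsub>GL2 x\<^esub> = mat 1"
  by (simp add: GL2_def units_of_def M2_def)
lemma GL2_carrier: "M \<in> carrier (GL2 x) \<longleftrightarrow> (\<exists>N. M ** N = mat 1 \<and> N ** M = mat 1)"
  by (auto simp add: GL2_def units_of_def M2_def Units_def)

lemma E2grp_mult [simp]: "a \<otimes>\<^bsub>E2grp S\<^esub> b = a ** b"
  by (simp add: E2grp_def GL2_def units_of_def M2_def)
lemma E2grp_one [simp]: "\<one>\<^bsub>E2grp S\<^esub> = mat 1"
  by (simp add: E2grp_def GL2_def units_of_def M2_def)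
lemma E2grp_carrier [simp]: "carrier (E2grp S) = E2 S"
  by (simp add: E2grp_def)

definition Tinv :: "'a::ring_1 list \<Rightarrow> 'a list" where
  "Tinv T = concat (map (\<lambda>t. [0, - t, 0]) (rev T))"

lemma E1_inv: "Emat1 t ** Emat [0, - t, 0] = mat 1" "Emat [0, - t, 0] ** Emat1 t = mat 1"
  by (simp_all add: Emat1_M2 mat1_M2)

lemma Tinv_Cons: "Tinv (t # T) = Tinv T @ [0, - t, 0]"
  by (simp add: Tinv_def)

lemma Emat_Tinv: "Emat T ** Emat (Tinv T) = mat 1" "Emat (Tinv T) ** Emat T = mat 1"
proof (induction T)
  case Nil
  show "Emat [] ** Emat (Tinv []) = mat 1" "Emat (Tinv []) ** Emat [] = mat 1"
    by (simp_all add: Tinv_def)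
next
  case (Cons t T)
  have "Emat (t # T) ** Emat (Tinv (t # T)) = Emat1 t ** (Emat T ** Emat (Tinv T)) ** Emat [0, - t, 0]"
    by (simp only: Tinv_Cons Emat_append Emat_Cons matrix_mul_assoc)
  also have "\<dots> = mat 1" using Cons.IH(1) E1_inv(1)[of t] by simp
  finally show "Emat (t # T) ** Emat (Tinv (t # T)) = mat 1" .
  have "Emat (Tinv (t # T)) ** Emat (t # T) = Emat (Tinv T) ** (Emat [0, - t, 0] ** Emat1 t) ** Emat T"
    by (simp only: Tinv_Cons Emat_append Emat_Cons matrix_mul_assoc)
  also have "\<dots> = mat 1" using Cons.IH(2) E1_inv(2)[of t] by simp
  finally show "Emat (Tinv (t # T)) ** Emat (t # T) = mat 1" .
qed

lemma map_Tinv: "jordan_hom f \<Longrightarrow> map f (Tinv T) = Tinv (map f T)"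
  by (induction T) (simp_all add: Tinv_Cons jh_zero jh_uminus, simp add: Tinv_def)

lemma Emat1_carrier: "Emat1 t \<in> carrier (GL2 x)"
  using E1_inv[of t] by (auto simp: GL2_carrier)

lemma Emat1_inv: "inv\<^bsub>GL2 TYPE('a::ring_1)\<^esub> (Emat1 (t::'a)) = Emat [0, - t, 0]"
proof -
  have c: "Emat [0, - t, 0] \<in> carrier (GL2 TYPE('a))"
    using E1_inv[of t] by (auto simp: GL2_carrier)
  show ?thesis
    by (rule group.inv_equality[OF group_GL2]) (use E1_inv(2)[of t] c Emat1_carrier in simp_all)
qed

lemma E2_sub: "E2 S \<subseteq> carrier (GL2 TYPE('a::ring_1))"
proof -
  have "Emat1 ` (S :: 'a set) \<subseteq> carrier (GL2 TYPE('a))" using Emat1_carrier by auto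
  thus ?thesis unfolding E2_def
    using group.generate_is_subgroup[OF group_GL2] subgroup.subset by blast
qed

lemma subgroup_E2: "subgroup (E2 S) (GL2 TYPE('a::ring_1))"
proof -
  have "Emat1 ` (S :: 'a set) \<subseteq> carrier (GL2 TYPE('a))" using Emat1_carrier by auto
  thus ?thesis unfolding E2_def using group.generate_is_subgroup[OF group_GL2] by blast
qed

lemma group_E2grp: "group (E2grp (S :: 'a::ring_1 set))"
  unfolding E2grp_def using subgroup.subgroup_is_group[OF subgroup_E2 group_GL2] .

lemma Emat_in_E2: "set T \<subseteq> S \<Longrightarrow> Emat T \<in> E2 S"
proof (induction T)
  case Nil
  show ?case unfolding E2_def using generate.one[of "GL2 TYPE('a)"] by simp
next
  case (Cons t T)
  hence "Emat1 t \<in> E2 S" unfolding E2_def by (auto intro: generate.incl)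
  with Cons show ?case unfolding E2_def using generate.eng[of "Emat1 t" "GL2 TYPE('a)" _ "Emat T"] by simp
qed

lemma E2_Emat: "g \<in> E2 (S :: 'a::ring_1 set) \<Longrightarrow> \<exists>T. g = Emat T"
  unfolding E2_def
proof (induction rule: generate.induct)
  case one
  then show ?case by (rule exI[of _ "[]"]) simp
next
  case (incl h)
  then obtain s where "h = Emat1 s" by auto
  then show ?case by (intro exI[of _ "[s]"]) (simp add: matrix_mul_rid)
next
  case (inv h)
  then obtain s where "h = Emat1 s" by auto
  then show ?case using Emat1_inv by blast
next
  case (eng h1 h2)
  then obtain T1 T2 where "h1 = Emat T1" "h2 = Emat T2" by auto
  then show ?case by (intro exI[of _ "T1 @ T2"]) (simp add: Emat_append)
qed


lemma subring_gen_sub: "S \<subseteq> subring_gen S"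
  unfolding subring_gen_def by blast

lemma subring_gen_least:
  assumes "S \<subseteq> A" "1 \<in> A" "0 \<in> A" "\<forall>x\<in>A. \<forall>y\<in>A. x + y \<in> A \<and> x - y \<in> A \<and> x * y \<in> A"
  shows "subring_gen S \<subseteq> A"
  unfolding subring_gen_def using assms by blast

lemma subring_gen_closed:
  "0 \<in> subring_gen S" "1 \<in> subring_gen S"
  "x \<in> subring_gen S \<Longrightarrow> y \<in> subring_gen S \<Longrightarrow> x - y \<in> subring_gen S"
  unfolding subring_gen_def by blast+

lemma subring_gen_uminus: "x \<in> subring_gen S \<Longrightarrow> - x \<in> subring_gen S"
  using subring_gen_closed(3)[where x=0 and y=x and S=S] subring_gen_closed(1)[of S] by simp



lemma scalar_comm_E1: "M2mk c 0 0 c ** Emat1 r = Emat1 r ** M2mk c 0 0 c \<longleftrightarrow> c * r = r * c"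
  by (simp add: Emat1_M2)

lemma part_a:
  fixes f :: "'a::ring_1 \<Rightarrow> 'b::ring_1"
  assumes jh: "jordan_hom f" and cen: "Emat T \<in> centre (E2grp (UNIV :: 'a set))"
  shows "Emat (map f T) \<in> centre (E2grp (subring_gen (range f)))"
proof -
  have comm: "\<And>s. Emat T ** Emat1 s = Emat1 s ** Emat T"
  proof -
    fix s :: 'a
    have "Emat1 s \<in> E2 UNIV" unfolding E2_def by (rule generate.incl) simp
    thus "Emat T ** Emat1 s = Emat1 s ** Emat T" using cen by (simp add: centre_def)
  qed
  obtain a b c d where Eq: "Emat T = M2mk a b c d" using M2_eta by blast
  have c0: "M2mk a b c d ** M2mk 0 1 (-1) 0 = M2mk 0 1 (-1) 0 ** M2mk a b c d"
    using comm[of 0] unfolding Eq Emat1_M2 .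
  have c1: "M2mk a b c d ** M2mk 1 1 (-1) 0 = M2mk 1 1 (-1) 0 ** M2mk a b c d"
    using comm[of 1] unfolding Eq Emat1_M2 .
  have "a * 0 + b * (-1) = 0 * a + 1 * c" "a * 1 + b * 0 = 0 * b + 1 * d"
    using c0 by (simp_all only: M2mk_mult M2mk_eq_iff)
  hence e1: "c = - b" "d = a" by simp_all
  have "a * 1 + b * 0 = 1 * b + 1 * d"
    using c1 by (simp_all only: M2mk_mult M2mk_eq_iff)
  hence e2: "a = b + d" by simp
  have b0: "b = 0"
  proof -
    have "a = b + a" using e2 e1(2) by (simp only:)
    hence "b + a = a" by (rule sym)
    thus ?thesis by simp
  qed
  have bcd: "b = 0" "c = 0" "d = a" using b0 e1 by simp_all
  hence Eq2: "Emat T = M2mk a 0 0 a" using Eq by simp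
  have ac: "a * s = s * a" for s
  proof -
    have "M2mk a 0 0 a ** M2mk s 1 (-1) 0 = M2mk s 1 (-1) 0 ** M2mk a 0 0 a"
      using comm[of s] unfolding Eq2 Emat1_M2 .
    hence "a * s + 0 * (-1) = s * a + 1 * 0" by (simp only: M2mk_mult M2mk_eq_iff)
    thus ?thesis by simp
  qed
  have f0: "f 0 = 0" using jh_zero[OF jh] .
  have f1: "f 1 = 1" using jh_one[OF jh] .
  have fn: "f (- x) = - f x" for x using jh_uminus[OF jh] .
  obtain p1 q1 r1 u1 where Ef: "Emat (map f T) = M2mk p1 q1 r1 u1" using M2_eta by blast
  have C1: "EB (map f T) = 0 \<and> EA (map f T) * ET (map f T) = 1 \<and> ET (map f T) * EA (map f T) = 1"
    using core[OF jh Eq2] .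
  hence q0: "q1 = 0" and pinv: "p1 * ET (map f T) = 1" "ET (map f T) * p1 = 1"
    using Ef by (simp_all add: EB_def EA_def)
  have ES2: "Emat ([0] @ T @ [0, 0, 0]) = M2mk a 0 0 a"
    by (simp add: Emat_append Eq2 Emat1_M2 mat1_M2)
  have "map f ([0] @ T @ [0, 0, 0]) = [0] @ map f T @ [0, 0, 0]" using f0 by simp
  hence "EB ([0] @ map f T @ [0, 0, 0]) = 0" using core[OF jh ES2] by simp
  hence r0: "r1 = 0"
    by (simp add: EB_def Emat_append Ef Emat1_M2 mat1_M2)
  have key: "u1 * f s = f s * p1" for s
  proof -
    have ES3: "Emat ([s] @ T @ [0, - s, 0]) = M2mk a 0 0 a"
      using ac[of s] by (simp add: Emat_append Eq2 Emat1_M2 mat1_M2)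
    have "map f ([s] @ T @ [0, - s, 0]) = [f s] @ map f T @ [0, - f s, 0]" using f0 fn by simp
    hence "EB ([f s] @ map f T @ [0, - f s, 0]) = 0" using core[OF jh ES3] by simp
    hence "- (f s * p1) + u1 * f s = 0"
      by (simp add: EB_def Emat_append Ef Emat1_M2 mat1_M2 q0 r0)
    thus ?thesis by (simp add: add.commute eq_neg_iff_add_eq_0 neg_eq_iff_add_eq_0)
  qed
  have up: "u1 = p1" using key[of 1] f1 by simp
  have pc: "p1 * f s = f s * p1" for s using key[of s] up by simp
  have Ef2: "Emat (map f T) = M2mk p1 0 0 p1" using Ef q0 r0 up by simp
  let ?R = "subring_gen (range f)"
  have sub: "?R \<subseteq> {x. p1 * x = x * p1}"
  proof (rule subring_gen_least)
    show "range f \<subseteq> {x. p1 * x = x * p1}" using pc by auto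
    show "1 \<in> {x. p1 * x = x * p1}" "0 \<in> {x. p1 * x = x * p1}" by simp_all
    show "\<forall>x\<in>{x. p1 * x = x * p1}. \<forall>y\<in>{x. p1 * x = x * p1}.
        x + y \<in> {x. p1 * x = x * p1} \<and> x - y \<in> {x. p1 * x = x * p1} \<and> x * y \<in> {x. p1 * x = x * p1}"
      by (auto simp: algebra_simps) (metis mult.assoc)
  qed
  have inE2: "Emat (map f T) \<in> E2 ?R"
    by (rule Emat_in_E2) (use subring_gen_sub[of "range f"] in auto)
  have commg: "Emat (map f T) ** g = g ** Emat (map f T)" if "g \<in> E2 ?R" for g
    using that unfolding E2_def
  proof (induction rule: generate.induct)
    case one
    then show ?case by (simp add: matrix_mul_lid matrix_mul_rid)
  next
    case (incl h)
    then obtain r where r: "r \<in> ?R" "h = Emat1 r" by auto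
    hence "p1 * r = r * p1" using sub by auto
    thus ?case using r Ef2 scalar_comm_E1 by metis
  next
    case (inv h)
    then obtain r where r: "r \<in> ?R" "h = Emat1 r" by auto
    hence pr: "p1 * r = r * p1" using sub by auto
    show ?case unfolding r(2) Emat1_inv Ef2
      using pr by (simp add: Emat1_M2 mat1_M2)
  next
    case (eng h1 h2)
    have "Emat (map f T) ** (h1 ** h2) = (Emat (map f T) ** h1) ** h2" by (simp add: matrix_mul_assoc)
    also have "\<dots> = h1 ** (Emat (map f T) ** h2)" using eng.IH(1) by (simp add: matrix_mul_assoc)
    also have "\<dots> = (h1 ** h2) ** Emat (map f T)" using eng.IH(2) by (simp add: matrix_mul_assoc)
    finally show ?case by simp
  qed
  show ?thesis unfolding centre_def using inE2 commg by simp
qed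


lemma mat1_centre: "mat 1 \<in> centre (E2grp (S :: 'a::ring_1 set))"
proof -
  have "mat 1 \<in> E2 S" using Emat_in_E2[of "[]" S] by simp
  thus ?thesis unfolding centre_def by (simp add: matrix_mul_lid matrix_mul_rid)
qed

theorem theorem3p6:
  fixes \<alpha> :: "'a::ring_1 \<Rightarrow> 'b::ring_1"
    and R'' :: "'b set" and H :: "('a^2^2) set" and H'' :: "('b^2^2) set"
    and N\<alpha> :: "('b^2^2) set"
  assumes jh: "jordan_hom \<alpha>"
    and R''_def: "R'' = subring_gen (range \<alpha>)"
    and H_def: "H = centre (E2grp (UNIV :: 'a set))"
    and H''_def: "H'' = centre (E2grp R'')"
    and N_def: "N\<alpha> = {Emat (map \<alpha> T) | T. Emat T = mat 1}"
  shows "(\<forall>T. Emat T \<in> H \<longrightarrow> Emat (map \<alpha> T) \<in> H'')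
       \<and> N\<alpha> \<subseteq> H''
       \<and> N\<alpha> \<lhd> E2grp R''
       \<and> (\<exists>\<alpha>E. \<alpha>E \<in> hom (E2grp (UNIV :: 'a set)) (E2grp R'' Mod N\<alpha>)
              \<and> (\<forall>T. \<alpha>E (Emat T) = N\<alpha> #>\<^bsub>E2grp R''\<^esub> Emat (map \<alpha> T)))"
proof -
  let ?G = "E2grp R''"
  have A: "\<forall>T. Emat T \<in> H \<longrightarrow> Emat (map \<alpha> T) \<in> H''"
    using part_a[OF jh] unfolding H_def H''_def R''_def by blast
  have B: "N\<alpha> \<subseteq> H''"
  proof
    fix x assume "x \<in> N\<alpha>"
    then obtain T where T: "x = Emat (map \<alpha> T)" "Emat T = mat 1" unfolding N_def by blast
    have "Emat T \<in> H" unfolding H_def T(2) by (rule mat1_centre)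
    thus "x \<in> H''" using A T(1) by blast
  qed
  have NE2: "N\<alpha> \<subseteq> E2 R''" using B unfolding H''_def centre_def by auto
  have grp: "group ?G" by (rule group_E2grp)
  interpret G: group ?G by (rule grp)
  have f0: "\<alpha> 0 = 0" using jh_zero[OF jh] .
  have inN: "Emat T = mat 1 \<Longrightarrow> Emat (map \<alpha> T) \<in> N\<alpha>" for T unfolding N_def by blast
  have subg: "subgroup N\<alpha> ?G"
  proof (rule G.subgroupI)
    show "N\<alpha> \<subseteq> carrier ?G" using NE2 by simp
    show "N\<alpha> \<noteq> {}" using inN[of "[]"] by auto
  next
    fix a assume "a \<in> N\<alpha>"
    then obtain T where T: "a = Emat (map \<alpha> T)" "Emat T = mat 1" unfolding N_def by blast
    have "Emat (Tinv T) = mat 1"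
      using Emat_Tinv(1)[of T] T(2) by (simp add: matrix_mul_lid)
    hence b: "Emat (map \<alpha> (Tinv T)) \<in> N\<alpha>" by (rule inN)
    have "inv\<^bsub>?G\<^esub> a = Emat (map \<alpha> (Tinv T))"
    proof (rule G.inv_equality)
      show "Emat (map \<alpha> (Tinv T)) \<otimes>\<^bsub>?G\<^esub> a = \<one>\<^bsub>?G\<^esub>"
        unfolding T(1) map_Tinv[OF jh] using Emat_Tinv(2) by simp
      show "a \<in> carrier ?G" using T(1) inN[OF T(2)] NE2 by auto
      show "Emat (map \<alpha> (Tinv T)) \<in> carrier ?G" using b NE2 by auto
    qed
    thus "inv\<^bsub>?G\<^esub> a \<in> N\<alpha>" using b by simp
  next
    fix a b assume "a \<in> N\<alpha>" "b \<in> N\<alpha>"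
    then obtain T S where T: "a = Emat (map \<alpha> T)" "Emat T = mat 1"
      and S: "b = Emat (map \<alpha> S)" "Emat S = mat 1" unfolding N_def by blast
    have "Emat (T @ S) = mat 1" using T(2) S(2) by (simp add: Emat_append matrix_mul_lid)
    hence "Emat (map \<alpha> (T @ S)) \<in> N\<alpha>" by (rule inN)
    thus "a \<otimes>\<^bsub>?G\<^esub> b \<in> N\<alpha>" using T(1) S(1) by (simp add: Emat_append)
  qed
  have nrm: "N\<alpha> \<lhd> ?G"
  proof -
    have "x \<otimes>\<^bsub>?G\<^esub> h \<otimes>\<^bsub>?G\<^esub> inv\<^bsub>?G\<^esub> x \<in> N\<alpha>" if x: "x \<in> carrier ?G" and h: "h \<in> N\<alpha>" for x h
    proof -
      have hc: "h \<in> carrier ?G" and xh: "x \<otimes>\<^bsub>?G\<^esub> h = h \<otimes>\<^bsub>?G\<^esub> x"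
        using B h x unfolding H''_def centre_def by auto
      have "x \<otimes>\<^bsub>?G\<^esub> h \<otimes>\<^bsub>?G\<^esub> inv\<^bsub>?G\<^esub> x = h \<otimes>\<^bsub>?G\<^esub> x \<otimes>\<^bsub>?G\<^esub> inv\<^bsub>?G\<^esub> x"
        by (simp only: xh)
      also have "\<dots> = h \<otimes>\<^bsub>?G\<^esub> (x \<otimes>\<^bsub>?G\<^esub> inv\<^bsub>?G\<^esub> x)"
        by (rule G.m_assoc[OF hc x G.inv_closed[OF x]])
      also have "\<dots> = h" by (simp only: G.r_inv[OF x] G.r_one[OF hc])
      finally show ?thesis using h by simp
    qed
    thus ?thesis using G.normal_inv_iff subg by blast
  qed
  interpret N: normal N\<alpha> ?G by (rule nrm)
  have welldef: "N\<alpha> #>\<^bsub>?G\<^esub> Emat (map \<alpha> S) = N\<alpha> #>\<^bsub>?G\<^esub> Emat (map \<alpha> T)"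
    if "Emat T = Emat S" for T S
  proof -
    have "Emat (T @ Tinv S) = mat 1"
      using that Emat_Tinv(1)[of S] by (simp add: Emat_append)
    hence n: "Emat (map \<alpha> (T @ Tinv S)) \<in> N\<alpha>" by (rule inN)
    have eq: "Emat (map \<alpha> (T @ Tinv S)) \<otimes>\<^bsub>?G\<^esub> Emat (map \<alpha> S) = Emat (map \<alpha> T)"
      using Emat_Tinv(2)[of "map \<alpha> S"]
      by (simp add: Emat_append map_Tinv[OF jh] matrix_mul_assoc[symmetric] matrix_mul_rid)
    have "Emat (map \<alpha> T) \<in> N\<alpha> #>\<^bsub>?G\<^esub> Emat (map \<alpha> S)"
      unfolding r_coset_def using n eq by blast
    moreover have "Emat (map \<alpha> S) \<in> carrier ?G"
      by (simp, rule Emat_in_E2) (use subring_gen_sub[of "range \<alpha>"] R''_def in auto)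
    ultimately show ?thesis using G.repr_independence subg by blast
  qed
  define \<alpha>E where "\<alpha>E g = N\<alpha> #>\<^bsub>?G\<^esub> Emat (map \<alpha> (SOME T. g = Emat T))" for g
  have hprop: "\<alpha>E (Emat T) = N\<alpha> #>\<^bsub>?G\<^esub> Emat (map \<alpha> T)" for T
  proof -
    have "Emat T = Emat (SOME S. Emat T = Emat S)" by (rule someI[of _ T]) simp
    thus ?thesis unfolding \<alpha>E_def using welldef by metis
  qed
  have carr: "Emat (map \<alpha> T) \<in> carrier ?G" for T
    by (simp, rule Emat_in_E2) (use subring_gen_sub[of "range \<alpha>"] R''_def in auto)
  have hom: "\<alpha>E \<in> hom (E2grp (UNIV :: 'a set)) (?G Mod N\<alpha>)"
  proof (rule homI)
    fix g assume "g \<in> carrier (E2grp (UNIV :: 'a set))"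
    then obtain T where T: "g = Emat T" using E2_Emat by auto
    show "\<alpha>E g \<in> carrier (?G Mod N\<alpha>)"
      unfolding T hprop FactGroup_def using G.rcosetsI[OF _ carr] N.subset by simp
  next
    fix g h assume "g \<in> carrier (E2grp (UNIV :: 'a set))" "h \<in> carrier (E2grp (UNIV :: 'a set))"
    then obtain T S where T: "g = Emat T" "h = Emat S" using E2_Emat by fastforce
    have "\<alpha>E (g \<otimes>\<^bsub>E2grp UNIV\<^esub> h) = N\<alpha> #>\<^bsub>?G\<^esub> (Emat (map \<alpha> T) \<otimes>\<^bsub>?G\<^esub> Emat (map \<alpha> S))"
      unfolding T by (simp add: Emat_append[symmetric] hprop)
    also have "\<dots> = (N\<alpha> #>\<^bsub>?G\<^esub> Emat (map \<alpha> T)) <#>\<^bsub>?G\<^esub> (N\<alpha> #>\<^bsub>?G\<^esub> Emat (map \<alpha> S))"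
      using N.rcos_sum[OF carr carr] by simp
    finally show "\<alpha>E (g \<otimes>\<^bsub>E2grp UNIV\<^esub> h) = \<alpha>E g \<otimes>\<^bsub>?G Mod N\<alpha>\<^esub> \<alpha>E h"
      unfolding T hprop FactGroup_def by simp
  qed
  show ?thesis using A B nrm hom hprop by blast
qed

end
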